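(* Let $\rho_{ABC}\in\mathcal{S}(\mathcal{H}_{ABC})$, $\tau_{AC}\in\mathcal{S}(\mathcal{H}_{AC})$, $\theta_{BC}\in\mathcal{S}(\mathcal{H}_{BC})$, $\omega_C\in\mathcal{S}(\mathcal{H}_C)$, and suppose $\operatorname{supp}(\rho_{ABC})\subseteq\operatorname{supp}(\tau_{AC})\cap\operatorname{supp}(\theta_{BC})\cap\operatorname{supp}(\omega_C)$. Then for every ordered triple $(X,Y,Z)$ that is a permutation of $(\tau_{AC},\omega_C,\theta_{BC})$, $$\lim_{\alpha\to1}\Delta_\alpha(\rho_{ABC};X,Y,Z)=\Delta(\rho_{ABC},\tau_{AC},\theta_{BC},\omega_C).$$ In particular, $\lim_{\alpha\to1}\Delta_\alpha(\rho_{ABC};\rho_{AC},\rho_C,\rho_{BC})=I(A;B|C)_\rho$.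
   Context: Finite-dimensional Hilbert spaces; natural log; functions of positive semidefinite operators by spectral calculus, with logarithms and negative powers taken on the support only ($A^0$ denotes the projection onto the support). Operators on subsystems are tensored with identities; subscripts denote marginals. $\Delta(\rho_{ABC},\tau_{AC},\theta_{BC},\omega_C)\equiv\operatorname{Tr}\{\rho_{ABC}[\log\rho_{ABC}-\log\tau_{AC}-\log\theta_{BC}+\log\omega_C]\}$; $I(A;B|C)_\rho=H(AC)+H(BC)-H(C)-H(ABC)$. Set $e(\tau_{AC})=e(\theta_{BC})=+1$, $e(\omega_C)=-1$. For an ordered triple $(X,Y,Z)$ that is a permutation of $(\tau_{AC},\omega_C,\theta_{BC})$ and $p\in\mathbb{R}$, let $K_p(X,Y,Z)=X^{pe_X/2}Y^{pe_Y/2}Z^{pe_Z}Y^{pe_Y/2}X^{pe_X/2}$, and define $\Delta_\alpha(\rho_{ABC};X,Y,Z)\equiv\frac{1}{\alpha-1}\log\operatorname{Tr}\{\rho_{ABC}^{\alpha}K_{1-\alpha}(X,Y,Z)\}$. For example $\Delta_\alpha(\rho;\tau,\omega,\theta)=\frac{1}{\alpha-1}\log\operatorname{Tr}\{\rho^\alpha\tau^{(1-\alpha)/2}\omega^{(\alpha-1)/2}\theta^{1-\alpha}\omega^{(\alpha-1)/2}\tau^{(1-\alpha)/2}\}$. *)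

theory Defs
  imports "HOL-Analysis.Analysis"
begin

text \<open>Operators on a finite-dimensional Hilbert space with orthonormal basis indexed
by the finite type 'n::finite are complex matrices of type complex^'n::finite^'n::finite.
H_ABC has basis index 'a * 'b * 'c, H_AC has 'a * 'c, H_BC has 'b * 'c, H_C has 'c.\<close>

definition cadj :: "complex^'n::finite^'m \<Rightarrow> complex^'m::finite^'n::finite" where
  "cadj A = (\<chi> i j. cnj (A $ j $ i))"

definition hermitian :: "complex^'n::finite^'n::finite \<Rightarrow> bool" where
  "hermitian A \<longleftrightarrow> cadj A = A"

definition unitary :: "complex^'n::finite^'n::finite \<Rightarrow> bool" where
  "unitary U \<longleftrightarrow> cadj U ** U = mat 1 \<and> U ** cadj U = mat 1"

definition qform :: "complex^'n::finite^'n::finite \<Rightarrow> complex^'n::finite \<Rightarrow> complex" where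
  "qform A v = (\<Sum>i\<in>UNIV. cnj (v $ i) * (A *v v) $ i)"

definition psd :: "complex^'n::finite^'n::finite \<Rightarrow> bool" where
  "psd A \<longleftrightarrow> hermitian A \<and> (\<forall>v. 0 \<le> Re (qform A v))"

definition mtrace :: "complex^'n::finite^'n::finite \<Rightarrow> complex" where
  "mtrace A = (\<Sum>i\<in>UNIV. A $ i $ i)"

definition density :: "complex^'n::finite^'n::finite \<Rightarrow> bool" where
  "density A \<longleftrightarrow> psd A \<and> mtrace A = 1"

definition supp :: "complex^'n::finite^'n::finite \<Rightarrow> (complex^'n::finite) set" where
  "supp A = range (\<lambda>v. A *v v)"

definition diagm :: "('n::finite \<Rightarrow> real) \<Rightarrow> complex^'n::finite^'n::finite" where
  "diagm d = (\<chi> i j. if i = j then complex_of_real (d i) else 0)"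

definition mfun :: "(real \<Rightarrow> real) \<Rightarrow> complex^'n::finite^'n::finite \<Rightarrow> complex^'n::finite^'n::finite" where
  "mfun f A = (SOME B. \<exists>U d. unitary U \<and> A = U ** diagm d ** cadj U
                              \<and> B = U ** diagm (f \<circ> d) ** cadj U)"

text \<open>powers and logarithm taken on the support only (so A^0 is the support projection)\<close>
definition mpow :: "real \<Rightarrow> complex^'n::finite^'n::finite \<Rightarrow> complex^'n::finite^'n::finite" where
  "mpow p A = mfun (\<lambda>x. if x > 0 then x powr p else 0) A"

definition mlog :: "complex^'n::finite^'n::finite \<Rightarrow> complex^'n::finite^'n::finite" where
  "mlog A = mfun (\<lambda>x. if x > 0 then ln x else 0) A"

text \<open>tensoring subsystem operators with identities\<close>
definition embAC :: "complex^('a::finite\<times>'c::finite)^('a::finite\<times>'c::finite) \<Rightarrow> complex^('a::finite\<times>'b::finite\<times>'c::finite)^('a::finite\<times>'b::finite\<times>'c::finite)" where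
  "embAC T = (\<chi> i j. if fst (snd i) = fst (snd j)
                       then T $ (fst i, snd (snd i)) $ (fst j, snd (snd j)) else 0)"

definition embBC :: "complex^('b::finite\<times>'c::finite)^('b::finite\<times>'c::finite) \<Rightarrow> complex^('a::finite\<times>'b::finite\<times>'c::finite)^('a::finite\<times>'b::finite\<times>'c::finite)" where
  "embBC T = (\<chi> i j. if fst i = fst j then T $ (snd i) $ (snd j) else 0)"

definition embC :: "complex^'c::finite^'c::finite \<Rightarrow> complex^('a::finite\<times>'b::finite\<times>'c::finite)^('a::finite\<times>'b::finite\<times>'c::finite)" where
  "embC T = (\<chi> i j. if fst i = fst j \<and> fst (snd i) = fst (snd j)
                      then T $ (snd (snd i)) $ (snd (snd j)) else 0)"

definition margAC :: "complex^('a::finite\<times>'b::finite\<times>'c::finite)^('a::finite\<times>'b::finite\<times>'c::finite) \<Rightarrow> complex^('a::finite\<times>'c::finite)^('a::finite\<times>'c::finite)" where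
  "margAC R = (\<chi> i j. \<Sum>b\<in>UNIV. R $ (fst i, b, snd i) $ (fst j, b, snd j))"

definition margBC :: "complex^('a::finite\<times>'b::finite\<times>'c::finite)^('a::finite\<times>'b::finite\<times>'c::finite) \<Rightarrow> complex^('b::finite\<times>'c::finite)^('b::finite\<times>'c::finite)" where
  "margBC R = (\<chi> i j. \<Sum>a\<in>UNIV. R $ (a, i) $ (a, j))"

definition margC :: "complex^('a::finite\<times>'b::finite\<times>'c::finite)^('a::finite\<times>'b::finite\<times>'c::finite) \<Rightarrow> complex^'c::finite^'c::finite" where
  "margC R = (\<chi> i j. \<Sum>a\<in>UNIV. \<Sum>b\<in>UNIV. R $ (a, b, i) $ (a, b, j))"

definition Delta ::
  "complex^('a::finite\<times>'b::finite\<times>'c::finite)^('a::finite\<times>'b::finite\<times>'c::finite) \<Rightarrow> complex^('a::finite\<times>'c::finite)^('a::finite\<times>'c::finite)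
   \<Rightarrow> complex^('b::finite\<times>'c::finite)^('b::finite\<times>'c::finite) \<Rightarrow> complex^'c::finite^'c::finite \<Rightarrow> real" where
  "Delta R T Th W = Re (mtrace (R ** (mlog R - embAC (mlog T) - embBC (mlog Th) + embC (mlog W))))"

definition entropy :: "complex^'n::finite^'n::finite \<Rightarrow> real" where
  "entropy A = - Re (mtrace (A ** mlog A))"

definition cmi :: "complex^('a::finite\<times>'b::finite\<times>'c::finite)^('a::finite\<times>'b::finite\<times>'c::finite) \<Rightarrow> real" where
  "cmi R = entropy (margAC R) + entropy (margBC R) - entropy (margC R) - entropy R"

text \<open>Factor p \<mapsto> (operator)^(p * e), embedded into H_ABC; e = +1 for tau, theta; e = -1 for omega.\<close>
definition tauF :: "complex^('a::finite\<times>'c::finite)^('a::finite\<times>'c::finite) \<Rightarrow> real \<Rightarrow> complex^('a::finite\<times>'b::finite\<times>'c::finite)^('a::finite\<times>'b::finite\<times>'c::finite)" where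
  "tauF T p = embAC (mpow p T)"

definition thetaF :: "complex^('b::finite\<times>'c::finite)^('b::finite\<times>'c::finite) \<Rightarrow> real \<Rightarrow> complex^('a::finite\<times>'b::finite\<times>'c::finite)^('a::finite\<times>'b::finite\<times>'c::finite)" where
  "thetaF T p = embBC (mpow p T)"

definition omegaF :: "complex^'c::finite^'c::finite \<Rightarrow> real \<Rightarrow> complex^('a::finite\<times>'b::finite\<times>'c::finite)^('a::finite\<times>'b::finite\<times>'c::finite)" where
  "omegaF W p = embC (mpow (- p) W)"

definition Kop :: "(real \<Rightarrow> complex^'n::finite^'n::finite) \<Rightarrow> (real \<Rightarrow> complex^'n::finite^'n::finite) \<Rightarrow> (real \<Rightarrow> complex^'n::finite^'n::finite)
                   \<Rightarrow> real \<Rightarrow> complex^'n::finite^'n::finite" where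
  "Kop X Y Z p = X (p/2) ** Y (p/2) ** Z p ** Y (p/2) ** X (p/2)"

definition DeltaAlpha :: "complex^'n::finite^'n::finite \<Rightarrow> (real \<Rightarrow> complex^'n::finite^'n::finite) \<Rightarrow> (real \<Rightarrow> complex^'n::finite^'n::finite)
                   \<Rightarrow> (real \<Rightarrow> complex^'n::finite^'n::finite) \<Rightarrow> real \<Rightarrow> real" where
  "DeltaAlpha R X Y Z \<alpha> = ln (Re (mtrace (mpow \<alpha> R ** Kop X Y Z (1 - \<alpha>)))) / (\<alpha> - 1)"

definition perm_triples :: "'x \<Rightarrow> 'x \<Rightarrow> 'x \<Rightarrow> ('x \<times> 'x \<times> 'x) set" where
  "perm_triples T W Th = {(T,W,Th), (T,Th,W), (W,T,Th), (W,Th,T), (Th,T,W), (Th,W,T)}"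

end

theory Submission
  imports Defs
begin

definition cinner :: "complex^'n::finite \<Rightarrow> complex^'n \<Rightarrow> complex" where
  "cinner x y = (\<Sum>i\<in>UNIV. cnj (x$i) * y$i)"

lemma cinner_add_left: "cinner (x + y) z = cinner x z + cinner y z"
  by (simp add: cinner_def distrib_right sum.distrib)
lemma cinner_add_right: "cinner z (x + y) = cinner z x + cinner z y"
  by (simp add: cinner_def distrib_left sum.distrib)
lemma cinner_diff_left: "cinner (x - y) z = cinner x z - cinner y z"
  by (simp add: cinner_def left_diff_distrib sum_subtractf)
lemma cinner_diff_right: "cinner z (x - y) = cinner z x - cinner z y"
  by (simp add: cinner_def right_diff_distrib sum_subtractf)
lemma cinner_smult_left: "cinner (c *s x) y = cnj c * cinner x y"
  by (simp add: cinner_def sum_distrib_left mult_ac)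
lemma cinner_smult_right: "cinner x (c *s y) = c * cinner x y"
  by (simp add: cinner_def sum_distrib_left mult_ac)
lemma cinner_zero_left[simp]: "cinner 0 y = 0" by (simp add: cinner_def)
lemma cinner_zero_right[simp]: "cinner x 0 = 0" by (simp add: cinner_def)
lemma cinner_commute: "cinner y x = cnj (cinner x y)"
  by (simp add: cinner_def mult.commute)
lemma cinner_sum_right: "cinner x (\<Sum>j\<in>S. f j) = (\<Sum>j\<in>S. cinner x (f j))"
  by (induct S rule: infinite_finite_induct) (auto simp: cinner_add_right)
lemma cinner_sum_left: "cinner (\<Sum>j\<in>S. f j) x = (\<Sum>j\<in>S. cinner (f j) x)"
  by (induct S rule: infinite_finite_induct) (auto simp: cinner_add_left)

lemma cinner_self: "cinner x x = of_real ((norm x)^2)"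
proof -
  have "cinner x x = (\<Sum>i\<in>UNIV. of_real ((norm (x$i))^2))"
    unfolding cinner_def by (intro sum.cong refl) (metis complex_norm_square mult.commute)
  also have "\<dots> = of_real (\<Sum>i\<in>UNIV. (norm (x$i))^2)" by simp
  also have "(\<Sum>i\<in>UNIV. (norm (x$i))^2) = (norm x)^2"
    by (simp add: norm_vec_def L2_set_def sum_nonneg)
  finally show ?thesis .
qed

lemma cinner_self_eq_0: "cinner x x = 0 \<longleftrightarrow> x = 0"
  by (simp add: cinner_self)

lemma cadj_component[simp]: "cadj A $ i $ j = cnj (A $ j $ i)"
  by (simp add: cadj_def)
lemma cadj_cadj[simp]: "cadj (cadj A) = A"
  by (simp add: vec_eq_iff)
lemma cadj_mult: "cadj (A ** B) = cadj B ** cadj A"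
  by (simp add: vec_eq_iff matrix_matrix_mult_def mult.commute)
lemma cadj_mat1[simp]: "cadj (mat 1 :: complex^'n::finite^'n) = mat 1"
  by (simp add: vec_eq_iff mat_def)

lemma cinner_cadj: "cinner x (A *v y) = cinner (cadj A *v x) y"
  unfolding cinner_def matrix_vector_mult_def
  by (simp add: sum_distrib_left sum_distrib_right mult_ac cnj_sum, subst sum.swap, simp)

lemma hermitian_cinner: "hermitian A \<Longrightarrow> cinner x (A *v y) = cinner (A *v x) y"
  by (metis cinner_cadj hermitian_def)

lemma qform_cinner: "qform A v = cinner v (A *v v)"
  by (simp add: qform_def cinner_def)


lemma cinner_scaleR_left: "cinner (t *\<^sub>R x) y = of_real t * cinner x y"
  by (simp add: cinner_def sum_distrib_left, simp add: scaleR_conv_of_real mult_ac)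
lemma cinner_scaleR_right: "cinner x (t *\<^sub>R y) = of_real t * cinner x y"
  by (simp add: cinner_def sum_distrib_left, simp add: scaleR_conv_of_real mult_ac)
lemma mv_scaleR: "(A::complex^'n::finite^'m::finite) *v (t *\<^sub>R x) = t *\<^sub>R (A *v x)"
  by (simp add: vec_eq_iff matrix_vector_mult_def scaleR_sum_right)

lemma continuous_cinner_right: "continuous_on UNIV (\<lambda>w. cinner s w)"
  unfolding cinner_def by (intro continuous_intros)

lemma continuous_qf: "continuous_on UNIV (\<lambda>v. Re (cinner v (A *v v)))"
  unfolding cinner_def matrix_vector_mult_def by (intro continuous_intros)

lemma eig_step:
  fixes A :: "complex^'n::finite^'n"
  assumes herm: "hermitian A"
    and Wdef: "W = {w. \<forall>s\<in>S. cinner s w = 0}"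
    and inv: "\<forall>s\<in>S. \<exists>c. A *v s = c *s s"
    and w0: "w0 \<in> W" "w0 \<noteq> 0"
  shows "\<exists>v\<in>W. cinner v v = 1 \<and> A *v v = of_real (Re (cinner v (A *v v))) *s v"
proof -
  have Wadd: "x + y \<in> W" if "x \<in> W" "y \<in> W" for x y
    using that by (simp add: Wdef cinner_add_right)
  have Wdiff: "x - y \<in> W" if "x \<in> W" "y \<in> W" for x y
    using that by (simp add: Wdef cinner_diff_right)
  have Wsm: "c *s x \<in> W" if "x \<in> W" for x c
    using that by (simp add: Wdef cinner_smult_right)
  have WsR: "t *\<^sub>R x \<in> W" if "x \<in> W" for x t
    using that by (simp add: Wdef cinner_scaleR_right)
  have AW: "A *v w \<in> W" if "w \<in> W" for w
  proof -
    have "cinner s (A *v w) = 0" if s: "s \<in> S" for s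
    proof -
      obtain c where c: "A *v s = c *s s" using inv s by blast
      have "cinner s (A *v w) = cinner (A *v s) w" by (rule hermitian_cinner[OF herm])
      also have "\<dots> = cnj c * cinner s w" by (simp add: c cinner_smult_left)
      also have "\<dots> = 0" using \<open>w \<in> W\<close> s by (simp add: Wdef)
      finally show ?thesis .
    qed
    then show ?thesis by (simp add: Wdef)
  qed
  define f where "f v = Re (cinner v (A *v v))" for v
  have fscale: "f (t *\<^sub>R v) = t^2 * f v" for t v
    by (simp add: f_def mv_scaleR cinner_scaleR_left cinner_scaleR_right power2_eq_square)
  define K where "K = W \<inter> {v. norm v = 1}"
  have closedW: "closed W"
  proof -
    have "W = (\<Inter>s\<in>S. {w. cinner s w = 0})" by (auto simp: Wdef)
    moreover have "closed {w. cinner s w = 0}" for s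
      by (rule closed_Collect_eq[OF continuous_cinner_right continuous_on_const])
    ultimately show ?thesis by auto
  qed
  have "closed {v::complex^'n. norm v = 1}"
    by (rule closed_Collect_eq) (intro continuous_intros)+
  with closedW have "closed K" unfolding K_def by auto
  moreover have "bounded K" unfolding K_def bounded_iff by auto
  ultimately have compK: "compact K" by (simp add: compact_eq_bounded_closed)
  have "(1 / norm w0) *\<^sub>R w0 \<in> K" using w0 WsR by (simp add: K_def)
  then have Kne: "K \<noteq> {}" by auto
  have "continuous_on K f" unfolding f_def
    by (rule continuous_on_subset[OF continuous_qf]) auto
  from continuous_attains_sup[OF compK Kne this]
  obtain v where vK: "v \<in> K" and vmax: "\<forall>y\<in>K. f y \<le> f v" by blast
  define lam where "lam = f v"
  have vW: "v \<in> W" and nv: "norm v = 1" using vK by (auto simp: K_def)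
  have vv: "cinner v v = 1" using nv by (simp add: cinner_self)
  have bound: "f w \<le> lam * (norm w)^2" if "w \<in> W" for w
  proof (cases "w = 0")
    case True then show ?thesis by (simp add: f_def)
  next
    case False
    then have "(1 / norm w) *\<^sub>R w \<in> K" using WsR[OF that] by (simp add: K_def)
    then have "f ((1 / norm w) *\<^sub>R w) \<le> lam" using vmax lam_def by blast
    then have "(1 / norm w)^2 * f w \<le> lam" by (simp add: fscale)
    then show ?thesis using False by (simp add: field_simps power2_eq_square)
  qed
  define c where "c = cinner v (A *v v)"
  define y where "y = A *v v - c *s v"
  have yW: "y \<in> W" unfolding y_def by (intro Wdiff AW vW Wsm)
  have vy: "cinner v y = 0"
    by (simp add: y_def cinner_diff_right cinner_smult_right vv c_def)
  have yv: "cinner y v = 0" using vy by (simp add: cinner_commute[of v y])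
  have Av: "A *v v = y + c *s v" by (simp add: y_def)
  define n where "n = (norm y)^2"
  have yy: "cinner y y = of_real n" by (simp add: n_def cinner_self)
  have yAv: "cinner y (A *v v) = of_real n"
    by (simp add: Av cinner_add_right cinner_smult_right yv yy)
  have vAy: "cinner v (A *v y) = of_real n"
  proof -
    have "cinner v (A *v y) = cinner (A *v v) y" by (rule hermitian_cinner[OF herm])
    also have "\<dots> = cnj (cinner y (A *v v))" by (rule cinner_commute)
    finally show ?thesis by (simp add: yAv)
  qed
  have n0: "n \<ge> 0" by (simp add: n_def)
  have key: "2 * t * n \<le> t^2 * (lam * n - f y)" for t
  proof -
    define w where "w = v + t *\<^sub>R y"
    have "w \<in> W" unfolding w_def by (intro Wadd vW WsR yW)
    then have b: "f w \<le> lam * (norm w)^2" by (rule bound)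
    have "cinner w (A *v w) = cinner v (A *v v) + of_real t * cinner v (A *v y)
            + of_real t * cinner y (A *v v) + of_real t * of_real t * cinner y (A *v y)"
      by (simp add: w_def matrix_vector_right_distrib mv_scaleR cinner_add_left
          cinner_add_right cinner_scaleR_left cinner_scaleR_right algebra_simps)
    then have fw: "f w = lam + 2 * t * n + t^2 * f y"
      by (simp add: f_def lam_def vAy yAv power2_eq_square)
    have "cinner w w = cinner v v + of_real t * cinner v y
            + of_real t * cinner y v + of_real t * of_real t * cinner y y"
      by (simp add: w_def cinner_add_left cinner_add_right cinner_scaleR_left cinner_scaleR_right algebra_simps)
    then have "cinner w w = of_real (1 + t^2 * n)"
      by (simp add: vv vy yv yy power2_eq_square)
    then have "of_real ((norm w)^2) = (of_real (1 + t^2 * n) :: complex)" by (simp only: cinner_self)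
    then have "(norm w)^2 = 1 + t^2 * n" using of_real_eq_iff by blast
    with b fw have "lam + 2 * t * n + t^2 * f y \<le> lam * (1 + t^2 * n)" by simp
    then show ?thesis by (simp add: algebra_simps)
  qed
  have "n = 0"
  proof (rule ccontr)
    assume "n \<noteq> 0"
    with n0 have npos: "n > 0" by simp
    define Kc where "Kc = lam * n - f y"
    define t where "t = n / (\<bar>Kc\<bar> + 1)"
    have d: "\<bar>Kc\<bar> + 1 > 0" by simp
    have tpos: "t > 0" using npos d unfolding t_def by (rule divide_pos_pos)
    have k: "2 * t * n \<le> t^2 * Kc" using key[of t] by (simp only: Kc_def)
    have "t * (2 * n) \<le> t * (t * Kc)" using k by (simp only: power2_eq_square mult.assoc mult.left_commute)
    then have "2 * n \<le> t * Kc" using tpos mult_le_cancel_left_pos by blast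
    also have "\<dots> \<le> t * \<bar>Kc\<bar>" using tpos by (intro mult_left_mono) auto
    also have "\<dots> < n"
    proof -
      have "t * \<bar>Kc\<bar> = n * (\<bar>Kc\<bar> / (\<bar>Kc\<bar> + 1))" by (simp only: t_def times_divide_eq_left times_divide_eq_right mult.commute)
      also have "\<bar>Kc\<bar> / (\<bar>Kc\<bar> + 1) < 1" using d by (simp only: divide_less_eq_1_pos)
      then have "n * (\<bar>Kc\<bar> / (\<bar>Kc\<bar> + 1)) < n * 1" using npos by (rule mult_strict_left_mono)
      finally show ?thesis by simp
    qed
    finally show False using npos by simp
  qed
  then have "y = 0" by (simp add: n_def)
  then have Av': "A *v v = c *s v" by (simp add: Av)
  have "cnj c = cinner (A *v v) v" unfolding c_def by (rule cinner_commute[symmetric])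
  also have "\<dots> = c" unfolding c_def by (rule hermitian_cinner[OF herm, symmetric])
  finally have "cnj c = c" .
  then have "Im c = 0" by (simp add: complex_eq_iff)
  then have cr: "of_real (Re c) = c" by (simp add: complex_eq_iff)
  have "A *v v = of_real (Re c) *s v" unfolding cr by (rule Av')
  then show ?thesis using vW vv unfolding c_def by blast
qed


lemma orthonormal_count:
  fixes u :: "nat \<Rightarrow> complex^'n::finite"
  assumes orth: "\<forall>i<k. \<forall>j<k. cinner (u i) (u j) = (if i = j then 1 else 0)"
    and k: "k < CARD('n)"
  shows "\<exists>w. w \<noteq> 0 \<and> (\<forall>j<k. cinner (u j) w = 0)"
proof (rule ccontr)
  assume H: "\<not> (\<exists>w. w \<noteq> 0 \<and> (\<forall>j<k. cinner (u j) w = 0))"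
  have exp: "x = (\<Sum>j<k. cinner (u j) x *s u j)" for x
  proof -
    define r where "r = x - (\<Sum>j<k. cinner (u j) x *s u j)"
    have "cinner (u i) r = 0" if i: "i < k" for i
    proof -
      have "cinner (u i) (\<Sum>j<k. cinner (u j) x *s u j) = (\<Sum>j<k. cinner (u j) x * cinner (u i) (u j))"
        by (simp add: cinner_sum_right cinner_smult_right)
      also have "\<dots> = (\<Sum>j<k. if j = i then cinner (u j) x else 0)"
        using orth i by (intro sum.cong refl) auto
      also have "\<dots> = cinner (u i) x" using i by simp
      finally show ?thesis by (simp add: r_def cinner_diff_right)
    qed
    with H have "r = 0" by blast
    then show ?thesis by (simp add: r_def)
  qed
  have one: "(\<Sum>j<k. cnj (u j $ i) * u j $ i) = 1" for i
  proof -
    have "(axis i 1 :: complex^'n) $ i = (\<Sum>j<k. cinner (u j) (axis i 1) *s u j) $ i"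
      using exp[of "axis i 1"] by simp
    moreover have "cinner (u j) (axis i 1) = cnj (u j $ i)" for j
      by (simp add: cinner_def axis_def if_distrib cong: if_cong)
    ultimately show ?thesis by simp
  qed
  have "of_nat CARD('n) = (\<Sum>i\<in>(UNIV::'n set). (1::complex))" by simp
  also have "\<dots> = (\<Sum>i\<in>UNIV. \<Sum>j<k. cnj (u j $ i) * u j $ i)" by (simp add: one)
  also have "\<dots> = (\<Sum>j<k. \<Sum>i\<in>UNIV. cnj (u j $ i) * u j $ i)" by (rule sum.swap)
  also have "\<dots> = (\<Sum>j<k. cinner (u j) (u j))" by (simp add: cinner_def)
  also have "\<dots> = (\<Sum>j<k. (1::complex))" using orth by (intro sum.cong refl) auto
  also have "\<dots> = of_nat k" by simp
  finally have "CARD('n) = k" using of_nat_eq_iff by blast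
  with k show False by simp
qed

lemma spectral_partial:
  fixes A :: "complex^'n::finite^'n"
  assumes herm: "hermitian A"
  shows "k \<le> CARD('n) \<Longrightarrow> \<exists>u r. (\<forall>i<k. \<forall>j<k. cinner (u i) (u j) = (if i = j then 1 else 0))
                \<and> (\<forall>j<k. A *v u j = of_real (r j) *s u j)"
proof (induct k)
  case 0 then show ?case by simp
next
  case (Suc k)
  then obtain u r where orth: "\<forall>i<k. \<forall>j<k. cinner (u i) (u j) = (if i = j then 1 else 0)"
    and eig: "\<forall>j<k. A *v u j = of_real (r j) *s u j" by auto
  from Suc.prems have "k < CARD('n)" by simp
  from orthonormal_count[OF orth this] obtain w0 where w0: "w0 \<noteq> 0" "\<forall>j<k. cinner (u j) w0 = 0" by blast
  define W where "W = {w. \<forall>s\<in>u ` {..<k}. cinner s w = 0}"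
  have "\<forall>s\<in>u ` {..<k}. \<exists>c. A *v s = c *s s" using eig by blast
  moreover have "w0 \<in> W" using w0 by (auto simp: W_def)
  ultimately obtain v where vW: "v \<in> W" and vv: "cinner v v = 1"
    and Av: "A *v v = of_real (Re (cinner v (A *v v))) *s v"
    using eig_step[OF herm W_def _ _ w0(1)] by blast
  have vu: "cinner (u j) v = 0" if "j < k" for j using vW that by (auto simp: W_def)
  have uv: "cinner v (u j) = 0" if "j < k" for j using vu[OF that] cinner_commute[of v "u j"] by simp
  define u' where "u' = u(k := v)"
  define r' where "r' = r(k := Re (cinner v (A *v v)))"
  have "\<forall>i<Suc k. \<forall>j<Suc k. cinner (u' i) (u' j) = (if i = j then 1 else 0)"
    using orth vv vu uv by (auto simp: u'_def less_Suc_eq)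
  moreover have "\<forall>j<Suc k. A *v u' j = of_real (r' j) *s u' j"
    using eig Av by (auto simp: u'_def r'_def less_Suc_eq)
  ultimately show ?case by blast
qed

lemma spectral_exists:
  fixes A :: "complex^'n::finite^'n"
  assumes herm: "hermitian A"
  shows "\<exists>U d. unitary U \<and> A = U ** diagm d ** cadj U"
proof -
  obtain u r where orth: "\<forall>i<CARD('n). \<forall>j<CARD('n). cinner (u i) (u j) = (if i = j then 1 else 0)"
    and eig: "\<forall>j<CARD('n). A *v u j = of_real (r j) *s u j"
    using spectral_partial[OF herm, of "CARD('n)"] by auto
  obtain g where g: "bij_betw g (UNIV::'n set) {0..<CARD('n)}"
    using ex_bij_betw_finite_nat[of "UNIV::'n set"] by auto
  have gl: "g j < CARD('n)" for j using g by (auto simp: bij_betw_def)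
  have ginj: "g j = g l \<longleftrightarrow> j = l" for j l using g by (auto simp: bij_betw_def inj_on_def)
  define U :: "complex^'n^'n" where "U = (\<chi> i j. u (g j) $ i)"
  define d where "d j = r (g j)" for j
  have UU: "cadj U ** U = mat 1"
  proof -
    have "(cadj U ** U) $ j $ l = mat 1 $ j $ l" for j l
    proof -
      have "(cadj U ** U) $ j $ l = cinner (u (g j)) (u (g l))"
        by (simp add: matrix_matrix_mult_def U_def cinner_def)
      also have "\<dots> = (if j = l then 1 else 0)" using orth gl ginj by simp
      finally show ?thesis by (simp add: mat_def)
    qed
    then show ?thesis by (simp add: vec_eq_iff)
  qed
  then have UU': "U ** cadj U = mat 1" using matrix_left_right_inverse by blast
  have AU: "A ** U = U ** diagm d"
  proof -
    have "(A ** U) $ i $ l = (U ** diagm d) $ i $ l" for i l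
    proof -
      have "(A ** U) $ i $ l = (A *v u (g l)) $ i"
        by (simp add: matrix_matrix_mult_def matrix_vector_mult_def U_def)
      also have "\<dots> = of_real (d l) * u (g l) $ i" using eig gl by (simp add: d_def)
      also have "\<dots> = (U ** diagm d) $ i $ l"
        by (simp add: matrix_matrix_mult_def diagm_def U_def if_distrib cong: if_cong)
      finally show ?thesis .
    qed
    then show ?thesis by (simp add: vec_eq_iff)
  qed
  have "A = A ** (U ** cadj U)" by (simp add: UU')
  also have "\<dots> = U ** diagm d ** cadj U" by (simp add: matrix_mul_assoc AU)
  finally show ?thesis using UU UU' unfolding unitary_def by blast
qed


definition SD :: "complex^'n::finite^'n \<Rightarrow> ('n \<Rightarrow> real) \<Rightarrow> complex^'n^'n" where
  "SD U f = U ** diagm f ** cadj U"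

lemma mult_if0: "a * (if P then b else 0) = (if P then a * b else (0::'a::mult_zero))"
  by simp
lemma if0_mult: "(if P then b else 0) * a = (if P then b * a else (0::'a::mult_zero))"
  by simp

lemma of_real_if01: "complex_of_real (if P then 1 else 0) = (if P then 1 else 0)"
  by simp

lemma mult_diagm_entry: "(M ** diagm g) $ i $ j = M $ i $ j * of_real (g j)"
  by (simp add: matrix_matrix_mult_def diagm_def mult_if0 if0_mult)
lemma diagm_mult_entry: "(diagm g ** M) $ i $ j = of_real (g i) * M $ i $ j"
  by (simp add: matrix_matrix_mult_def diagm_def mult_if0 if0_mult)

lemma diagm_mult: "diagm f ** diagm g = diagm (\<lambda>k. f k * g k)"
  by (simp add: vec_eq_iff mult_diagm_entry) (simp add: diagm_def)

lemma SD_mult: "unitary U \<Longrightarrow> SD U f ** SD U g = SD U (\<lambda>k. f k * g k)"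
proof -
  assume u: "unitary U"
  have "SD U f ** SD U g = U ** diagm f ** (cadj U ** U) ** diagm g ** cadj U"
    by (simp add: SD_def matrix_mul_assoc)
  also have "\<dots> = SD U (\<lambda>k. f k * g k)"
    using u by (simp add: unitary_def SD_def diagm_mult matrix_mul_assoc[symmetric])
  finally show ?thesis .
qed

lemma SD_entry: "SD U f $ i $ j = (\<Sum>k\<in>UNIV. U $ i $ k * of_real (f k) * cnj (U $ j $ k))"
  by (simp add: SD_def matrix_matrix_mult_def diagm_def mult_if0 if0_mult)

lemma SD_sum: "SD U f = (\<Sum>k\<in>UNIV. f k *\<^sub>R SD U (\<lambda>l. if l = k then 1 else 0))"
proof -
  have "SD U f $ i $ j = (\<Sum>k\<in>UNIV. f k *\<^sub>R SD U (\<lambda>l. if l = k then 1 else 0)) $ i $ j" for i j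
  proof -
    have "(\<Sum>k\<in>UNIV. f k *\<^sub>R SD U (\<lambda>l. if l = k then 1 else 0)) $ i $ j
        = (\<Sum>k\<in>UNIV. f k *\<^sub>R (U $ i $ k * cnj (U $ j $ k)))"
      by (simp add: SD_entry of_real_if01 mult_if0 if0_mult)
    also have "\<dots> = SD U f $ i $ j"
      by (simp add: SD_entry scaleR_conv_of_real mult_ac)
    finally show ?thesis by simp
  qed
  then show ?thesis by (simp add: vec_eq_iff)
qed

lemma SD_deriv:
  assumes "\<And>k. ((\<lambda>p. \<phi> k p) has_real_derivative \<phi>' k) (at p within s)"
  shows "((\<lambda>p. SD U (\<lambda>k. \<phi> k p)) has_vector_derivative SD U \<phi>') (at p within s)"
proof -
  have "((\<lambda>p. \<Sum>k\<in>UNIV. \<phi> k p *\<^sub>R SD U (\<lambda>l. if l = k then 1 else 0)) has_vector_derivative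
        (\<Sum>k\<in>UNIV. \<phi>' k *\<^sub>R SD U (\<lambda>l. if l = k then 1 else 0))) (at p within s)"
    by (rule has_vector_derivative_sum)
       (use has_vector_derivative_scaleR[OF assms has_vector_derivative_const] in simp)
  then show ?thesis by (subst (1 2) SD_sum) simp
qed

lemma mfun_SD:
  assumes u: "unitary U" and A: "A = SD U d"
  shows "mfun f A = SD U (f \<circ> d)"
proof -
  have "\<exists>B V e. unitary V \<and> A = V ** diagm e ** cadj V \<and> B = V ** diagm (f \<circ> e) ** cadj V"
    using u A unfolding SD_def by blast
  then have "\<exists>V e. unitary V \<and> A = V ** diagm e ** cadj V \<and> mfun f A = V ** diagm (f \<circ> e) ** cadj V"
    unfolding mfun_def by (rule someI_ex)
  then obtain V e where v: "unitary V" and AV: "A = SD V e" and mf: "mfun f A = SD V (f \<circ> e)"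
    unfolding SD_def by blast
  define W where "W = cadj V ** U"
  have "cadj V ** A ** U = W ** diagm d"
    using u by (simp add: A SD_def W_def matrix_mul_assoc[symmetric] unitary_def)
  moreover have "cadj V ** A ** U = diagm e ** W"
  proof -
    have "cadj V ** A ** U = (cadj V ** V) ** diagm e ** (cadj V ** U)"
      by (simp add: AV SD_def matrix_mul_assoc)
    then show ?thesis using v by (simp add: W_def unitary_def)
  qed
  ultimately have WD: "W ** diagm d = diagm e ** W" by simp
  have WF: "W ** diagm (f \<circ> d) = diagm (f \<circ> e) ** W"
  proof -
    have "W $ i $ j * of_real (f (d j)) = of_real (f (e i)) * W $ i $ j" for i j
    proof (cases "W $ i $ j = 0")
      case False
      have "W $ i $ j * of_real (d j) = of_real (e i) * W $ i $ j"
        using arg_cong[OF WD, of "\<lambda>M. M $ i $ j"] by (simp add: mult_diagm_entry diagm_mult_entry)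
      with False have "d j = e i" by (simp add: mult.commute)
      then show ?thesis by (simp add: mult.commute)
    qed simp
    then show ?thesis by (simp add: vec_eq_iff mult_diagm_entry diagm_mult_entry)
  qed
  have "SD U (f \<circ> d) = (V ** cadj V) ** U ** diagm (f \<circ> d) ** cadj U"
    using v by (simp add: SD_def unitary_def)
  also have "\<dots> = V ** (W ** diagm (f \<circ> d)) ** cadj U"
    by (simp add: W_def matrix_mul_assoc)
  also have "\<dots> = V ** (diagm (f \<circ> e) ** W) ** cadj U"
    by (simp only: WF)
  also have "\<dots> = V ** diagm (f \<circ> e) ** (cadj V ** (U ** cadj U))"
    by (simp add: W_def matrix_mul_assoc)
  also have "\<dots> = SD V (f \<circ> e)" using u by (simp add: SD_def unitary_def)
  finally show ?thesis using mf by simp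
qed

lemma SD_exists: "hermitian A \<Longrightarrow> \<exists>U d. unitary U \<and> A = SD U d"
  unfolding SD_def by (rule spectral_exists)

lemma psd_eig_nonneg:
  assumes p: "psd A" and u: "unitary U" and A: "A = SD U d"
  shows "d k \<ge> 0"
proof -
  have AU: "A ** U = U ** diagm d" using u by (simp add: A SD_def unitary_def matrix_mul_assoc[symmetric])
  define c where "c = (\<chi> i. U $ i $ k)"
  have Ac: "A *v c = of_real (d k) *s c"
  proof -
    have "(A *v c) $ i = (A ** U) $ i $ k" for i
      by (simp add: c_def matrix_matrix_mult_def matrix_vector_mult_def)
    then show ?thesis by (simp add: vec_eq_iff AU mult_diagm_entry c_def mult.commute)
  qed
  have cc: "cinner c c = 1"
  proof -
    have "cinner c c = (cadj U ** U) $ k $ k"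
      by (simp add: cinner_def c_def matrix_matrix_mult_def)
    then show ?thesis using u by (simp add: unitary_def mat_def)
  qed
  have "qform A c = of_real (d k)"
    by (simp add: qform_cinner Ac cinner_smult_right cc)
  with p show ?thesis unfolding psd_def by (metis Re_complex_of_real)
qed

definition hp :: "real \<Rightarrow> real \<Rightarrow> real" where
  "hp p x = (if x > 0 then x powr p else 0)"
definition lg :: "real \<Rightarrow> real" where
  "lg x = (if x > 0 then ln x else 0)"

lemma mpow_SD: "unitary U \<Longrightarrow> A = SD U d \<Longrightarrow> mpow p A = SD U (\<lambda>k. hp p (d k))"
  unfolding mpow_def by (simp add: mfun_SD o_def hp_def)
lemma mlog_SD: "unitary U \<Longrightarrow> A = SD U d \<Longrightarrow> mlog A = SD U (\<lambda>k. lg (d k))"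
  unfolding mlog_def by (simp add: mfun_SD o_def lg_def)

lemma hp_deriv: "((\<lambda>p. hp p x) has_real_derivative lg x * hp p x) (at p within s)"
proof (cases "x > 0")
  case True
  have "((\<lambda>p. exp (p * ln x)) has_real_derivative exp (p * ln x) * ln x) (at p within s)"
    by (auto intro!: derivative_eq_intros)
  then show ?thesis using True by (simp add: hp_def lg_def powr_def mult.commute)
next
  case False then show ?thesis by (simp add: hp_def lg_def)
qed


lemma mtrace_add: "mtrace (A + B) = mtrace A + mtrace B"
  by (simp add: mtrace_def sum.distrib)
lemma mtrace_scaleR: "mtrace (c *\<^sub>R A) = c *\<^sub>R mtrace A"
  by (simp add: mtrace_def scaleR_sum_right)
lemma mtrace_cyclic: "mtrace ((A::complex^'n::finite^'n) ** B) = mtrace (B ** A)"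
  unfolding mtrace_def matrix_matrix_mult_def by (simp, subst sum.swap, simp add: mult.commute)

lemma mm_add_rdistrib: "((A::'a::semiring_1^'n::finite^'m::finite) + B) ** C = A ** C + B ** C"
  by (simp add: vec_eq_iff matrix_matrix_mult_def distrib_right sum.distrib)

lemma mm_scaleR_left: "(c *\<^sub>R (A::complex^'n::finite^'m::finite)) ** (B::complex^'p::finite^'n) = c *\<^sub>R (A ** B)"
  by (simp add: scalar_matrix_assoc)
lemma mm_scaleR_right: "(A::complex^'n::finite^'m::finite) ** (c *\<^sub>R (B::complex^'p::finite^'n)) = c *\<^sub>R (A ** B)"
  by (simp add: matrix_scalar_ac scalar_matrix_assoc)

lemma bl_retrace: "bounded_linear (\<lambda>M::complex^'n::finite^'n. Re (mtrace M))"
proof -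
  have "linear (\<lambda>M::complex^'n::finite^'n. Re (mtrace M))"
    by (rule linearI) (simp_all add: mtrace_add mtrace_scaleR)
  then show ?thesis by (simp add: linear_conv_bounded_linear)
qed

lemma bb_mm: "bounded_bilinear (\<lambda>(A::complex^'n::finite^'n) B. A ** B)"
proof -
  have "bilinear (\<lambda>(A::complex^'n::finite^'n) B. A ** B)"
    unfolding bilinear_def
    by (auto intro!: linearI simp: matrix_add_ldistrib mm_add_rdistrib
        scalar_matrix_assoc matrix_scalar_ac)
  then show ?thesis by (simp add: bilinear_conv_bounded_bilinear)
qed

lemma mm_vd:
  fixes f g :: "real \<Rightarrow> complex^'n::finite^'n"
  assumes "(f has_vector_derivative f') (at x)" "(g has_vector_derivative g') (at x)"
  shows "((\<lambda>x. f x ** g x) has_vector_derivative (f x ** g' + f' ** g x)) (at x)"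
  using bounded_bilinear.has_vector_derivative[OF bb_mm assms] by simp

lemma vd_affine:
  fixes X :: "real \<Rightarrow> 'a::real_normed_vector"
  assumes "(X has_vector_derivative L) (at (a * x + b))"
  shows "((\<lambda>p. X (a * p + b)) has_vector_derivative a *\<^sub>R L) (at x)"
proof -
  have "((\<lambda>p. a * p + b) has_vector_derivative a) (at x)"
    unfolding has_real_derivative_iff_has_vector_derivative[symmetric]
    by (auto intro!: derivative_eq_intros)
  from vector_diff_chain_at[OF this assms] show ?thesis by (simp add: o_def)
qed

definition absorbs :: "complex^'n::finite^'n \<Rightarrow> complex^'n^'n \<Rightarrow> bool" where
  "absorbs R P \<longleftrightarrow> P ** R = R \<and> R ** P = R"

lemma absorbs_mult: "absorbs R P \<Longrightarrow> absorbs R Q \<Longrightarrow> absorbs R (P ** Q)"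
  unfolding absorbs_def by (simp add: matrix_mul_assoc[symmetric]) (simp add: matrix_mul_assoc)

lemma tr_absL: "absorbs R P \<Longrightarrow> mtrace (R ** (P ** M)) = mtrace (R ** M)"
  unfolding absorbs_def by (simp add: matrix_mul_assoc)
lemma tr_absR: "absorbs R P \<Longrightarrow> mtrace (R ** (M ** P)) = mtrace (R ** M)"
proof -
  assume "absorbs R P"
  then have PR: "P ** R = R" by (simp add: absorbs_def)
  have "mtrace (R ** (M ** P)) = mtrace ((R ** M) ** P)" by (simp add: matrix_mul_assoc)
  also have "\<dots> = mtrace (P ** (R ** M))" by (rule mtrace_cyclic)
  also have "\<dots> = mtrace (R ** M)" by (simp add: matrix_mul_assoc PR)
  finally show ?thesis .
qed

lemma tr_distrib:
  "mtrace (R ** (A + B)) = mtrace (R ** A) + mtrace (R ** B)"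
  "mtrace ((R::complex^'n::finite^'n) ** (c *\<^sub>R A)) = c *\<^sub>R mtrace (R ** A)"
  by (simp_all add: matrix_add_ldistrib mtrace_add mm_scaleR_right mtrace_scaleR)


lemma mtrace_uminus: "mtrace (- A) = - mtrace A"
  by (simp add: mtrace_def sum_negf)
lemma mm_uminus_right: "(A::complex^'n::finite^'m::finite) ** (- (B::complex^'p::finite^'n)) = - (A ** B)"
  by (simp add: vec_eq_iff matrix_matrix_mult_def sum_negf)

lemma mtrace_diff: "mtrace (A - B) = mtrace A - mtrace B"
  by (simp add: mtrace_def sum_subtractf)

lemma core_limit:
  fixes R L LX LY LZ :: "complex^'n::finite^'n" and Rf X Y Z :: "real \<Rightarrow> complex^'n^'n"
  assumes Rd: "(Rf has_vector_derivative L ** R) (at 1)"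
    and R1: "Rf 1 = R" and tr: "mtrace R = 1"
    and Xd: "(X has_vector_derivative LX) (at 0)" and Xa: "absorbs R (X 0)"
    and Yd: "(Y has_vector_derivative LY) (at 0)" and Ya: "absorbs R (Y 0)"
    and Zd: "(Z has_vector_derivative LZ) (at 0)" and Za: "absorbs R (Z 0)"
  shows "((\<lambda>\<alpha>. ln (Re (mtrace (Rf \<alpha> ** Kop X Y Z (1 - \<alpha>)))) / (\<alpha> - 1)) \<longlongrightarrow>
          Re (mtrace (R ** L)) - Re (mtrace (R ** LX)) - Re (mtrace (R ** LY)) - Re (mtrace (R ** LZ))) (at 1)"
proof -
  have X2: "((\<lambda>p. X (p/2)) has_vector_derivative (1/2) *\<^sub>R LX) (at 0)"
    using vd_affine[of X LX "1/2" 0 0] Xd by (simp add: mult.commute)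
  have Y2: "((\<lambda>p. Y (p/2)) has_vector_derivative (1/2) *\<^sub>R LY) (at 0)"
    using vd_affine[of Y LY "1/2" 0 0] Yd by (simp add: mult.commute)
  define X0 where "X0 = X 0"
  define Y0 where "Y0 = Y 0"
  define Z0 where "Z0 = Z 0"
  define K0 where "K0 = X0 ** Y0 ** Z0 ** Y0 ** X0"
  define K' where "K' = X0 ** Y0 ** Z0 ** Y0 ** ((1/2) *\<^sub>R LX) +
     (X0 ** Y0 ** Z0 ** ((1/2) *\<^sub>R LY) +
      (X0 ** Y0 ** LZ + (X0 ** ((1/2) *\<^sub>R LY) + (1/2) *\<^sub>R LX ** Y0) ** Z0) ** Y0) ** X0"
  have Kd: "((\<lambda>p. Kop X Y Z p) has_vector_derivative K') (at 0)"
    using mm_vd[OF mm_vd[OF mm_vd[OF mm_vd[OF X2 Y2] Zd] Y2] X2]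
    by (simp add: Kop_def K'_def X0_def Y0_def Z0_def)
  have K0: "Kop X Y Z 0 = K0" by (simp add: Kop_def K0_def X0_def Y0_def Z0_def)
  have Kc: "((\<lambda>\<alpha>. Kop X Y Z (1 - \<alpha>)) has_vector_derivative (-1) *\<^sub>R K') (at 1)"
    using vd_affine[of "\<lambda>p. Kop X Y Z p" K' "-1" 1 1] Kd by simp
  define G where "G \<alpha> = Rf \<alpha> ** Kop X Y Z (1 - \<alpha>)" for \<alpha>
  have Gd: "(G has_vector_derivative (R ** ((-1) *\<^sub>R K') + (L ** R) ** K0)) (at 1)"
    using mm_vd[OF Rd Kc] unfolding G_def by (simp add: R1 K0)
  define H where "H \<alpha> = Re (mtrace (G \<alpha>))" for \<alpha>
  define D where "D = Re (mtrace (R ** ((-1) *\<^sub>R K') + (L ** R) ** K0))"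
  have Hd: "(H has_real_derivative D) (at 1)"
    unfolding has_real_derivative_iff_has_vector_derivative H_def D_def
    by (rule bounded_linear.has_vector_derivative[OF bl_retrace Gd])
  have abs0: "absorbs R X0" "absorbs R Y0" "absorbs R Z0"
    using Xa Ya Za by (simp_all add: X0_def Y0_def Z0_def)
  have absK: "absorbs R K0" unfolding K0_def by (intro absorbs_mult abs0)
  then have RK: "R ** K0 = R" by (simp add: absorbs_def)
  have H1: "H 1 = 1" by (simp add: H_def G_def R1 K0 RK tr)
  have trK': "mtrace (R ** K') = mtrace (R ** LX) + mtrace (R ** LY) + mtrace (R ** LZ)"
  proof -
    have "mtrace (R ** K') = (1/2) *\<^sub>R mtrace (R ** LX) + ((1/2) *\<^sub>R mtrace (R ** LY) +
          (mtrace (R ** LZ) + ((1/2) *\<^sub>R mtrace (R ** LY) + (1/2) *\<^sub>R mtrace (R ** LX))))"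
      unfolding K'_def
      by (simp add: matrix_mul_assoc[symmetric] matrix_add_ldistrib mm_add_rdistrib
          mm_scaleR_left mm_scaleR_right mtrace_add mtrace_scaleR
          tr_absL tr_absR abs0 absorbs_mult)
    then show ?thesis by (simp add: scaleR_conv_of_real algebra_simps)
  qed
  have "mtrace ((L ** R) ** K0) = mtrace (R ** L)"
    by (simp add: matrix_mul_assoc[symmetric] RK mtrace_cyclic)
  then have Dv: "D = Re (mtrace (R ** L)) - Re (mtrace (R ** LX)) - Re (mtrace (R ** LY)) - Re (mtrace (R ** LZ))"
    by (simp add: D_def mtrace_add mm_scaleR_right mtrace_scaleR trK' mm_uminus_right mtrace_uminus mtrace_diff)
  have "((\<lambda>\<alpha>. ln (H \<alpha>)) has_real_derivative D / H 1) (at 1)"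
    using H1 by (auto intro!: derivative_eq_intros Hd)
  then have "((\<lambda>\<alpha>. ln (H \<alpha>)) has_real_derivative D) (at 1)" by (simp add: H1)
  then have "((\<lambda>y. (ln (H y) - ln (H 1)) / (y - 1)) \<longlongrightarrow> D) (at 1)"
    by (simp add: has_field_derivative_iff)
  moreover have "ln (H 1) = 0" by (simp add: H1)
  ultimately have "((\<lambda>y. ln (H y) / (y - 1)) \<longlongrightarrow> D) (at 1)" by simp
  then show ?thesis by (simp only: Dv H_def G_def)
qed


definition nonneg :: "complex^'n::finite^'n \<Rightarrow> bool" where
  "nonneg A \<longleftrightarrow> hermitian A \<and> (\<forall>U d. unitary U \<longrightarrow> A = SD U d \<longrightarrow> (\<forall>k. d k \<ge> 0))"

lemma psd_nonneg: "psd A \<Longrightarrow> nonneg A"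
  unfolding nonneg_def using psd_eig_nonneg by (auto simp: psd_def)

lemma nonneg_SD:
  assumes "nonneg A"
  obtains U d where "unitary U" "A = SD U d" "\<And>k. d k \<ge> 0"
  using assms SD_exists unfolding nonneg_def by metis

lemma cadj_SD: "cadj (SD U f) = SD U f"
  by (simp add: vec_eq_iff SD_entry cnj_sum mult_ac)

lemma hermitian_SD: "hermitian (SD U f)"
  by (simp add: hermitian_def cadj_SD)

lemma mtrace_SD: "unitary U \<Longrightarrow> mtrace (SD U f) = of_real (\<Sum>k\<in>UNIV. f k)"
proof -
  assume u: "unitary U"
  have "mtrace (SD U f) = mtrace ((U ** diagm f) ** cadj U)" by (simp add: SD_def)
  also have "\<dots> = mtrace (cadj U ** (U ** diagm f))" by (rule mtrace_cyclic)
  also have "\<dots> = mtrace (diagm f)" using u by (simp add: matrix_mul_assoc unitary_def)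
  also have "\<dots> = of_real (\<Sum>k\<in>UNIV. f k)" by (simp add: mtrace_def diagm_def)
  finally show ?thesis .
qed

lemma SD_cong: "(\<And>k. f k = g k) \<Longrightarrow> SD U f = SD U g"
  by (metis ext)

lemma SD_one: fixes U :: "complex^'n::finite^'n" shows "unitary U \<Longrightarrow> SD U (\<lambda>k. 1) = mat 1"
proof -
  assume "unitary U"
  moreover have "diagm (\<lambda>k. 1) = (mat 1 :: complex^'n::finite^'n)" by (simp add: vec_eq_iff diagm_def mat_def)
  ultimately show ?thesis by (simp add: SD_def unitary_def)
qed

lemma SD_diff: "SD U f - SD U g = SD U (\<lambda>k. f k - g k)"
  by (simp add: vec_eq_iff SD_entry sum_subtractf algebra_simps)

lemma state_facts:
  fixes A :: "complex^'n::finite^'n"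
  assumes "nonneg A"
  shows "((\<lambda>p. mpow p A) has_vector_derivative mlog A) (at 0)"
    and "((\<lambda>p. mpow p A) has_vector_derivative mlog A ** A) (at 1)"
    and "mpow 1 A = A"
    and "absorbs A (mpow 0 A)"
    and "hermitian (mpow 0 A)"
    and "mpow 0 A ** mpow 0 A = mpow 0 A"
    and "Re (mtrace (A ** (mat 1 - mpow 0 A))) = 0"
proof -
  obtain U d where u: "unitary U" and A: "A = SD U d" and d: "\<And>k. d k \<ge> 0"
    using nonneg_SD[OF assms] by blast
  have mp: "(\<lambda>p. mpow p A) = (\<lambda>p. SD U (\<lambda>k. hp p (d k)))"
    using mpow_SD[OF u A] by auto
  have ml: "mlog A = SD U (\<lambda>k. lg (d k))" by (rule mlog_SD[OF u A])
  have der: "((\<lambda>p. mpow p A) has_vector_derivative SD U (\<lambda>k. lg (d k) * hp p (d k))) (at p)" for p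
    unfolding mp by (rule SD_deriv) (rule hp_deriv)
  have h0: "lg (d k) * hp 0 (d k) = lg (d k)" for k by (simp add: lg_def hp_def)
  show "((\<lambda>p. mpow p A) has_vector_derivative mlog A) (at 0)"
    using der[of 0] by (simp add: h0 ml)
  have h1: "hp 1 (d k) = d k" for k using d[of k] by (auto simp: hp_def)
  have "SD U (\<lambda>k. lg (d k) * hp 1 (d k)) = mlog A ** A"
    unfolding ml by (simp add: A SD_mult[OF u] h1)
  then show "((\<lambda>p. mpow p A) has_vector_derivative mlog A ** A) (at 1)"
    using der[of 1] by simp
  show "mpow 1 A = A" unfolding mpow_SD[OF u A] h1 by (simp add: A)
  have P: "mpow 0 A = SD U (\<lambda>k. hp 0 (d k))" by (rule mpow_SD[OF u A])
  have hd: "hp 0 (d k) * d k = d k" for k using d[of k] by (auto simp: hp_def)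
  have dh: "d k * hp 0 (d k) = d k" for k using d[of k] by (auto simp: hp_def)
  show "absorbs A (mpow 0 A)"
    unfolding absorbs_def P by (simp add: A SD_mult[OF u] hd dh)
  show "hermitian (mpow 0 A)" unfolding P by (rule hermitian_SD)
  have hh: "hp 0 (d k) * hp 0 (d k) = hp 0 (d k)" for k by (simp add: hp_def)
  show "mpow 0 A ** mpow 0 A = mpow 0 A" unfolding P by (simp add: SD_mult[OF u] hh)
  have "A ** (mat 1 - mpow 0 A) = SD U (\<lambda>k. d k * (1 - hp 0 (d k)))"
    unfolding P by (simp add: A SD_one[OF u, symmetric] SD_diff SD_mult[OF u])
  also have "\<dots> = SD U (\<lambda>k. 0)" using dh by (intro SD_cong) (simp add: algebra_simps)
  finally show "Re (mtrace (A ** (mat 1 - mpow 0 A))) = 0" by (simp add: mtrace_SD[OF u])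
qed


lemma sum_UNIV_prod: "(\<Sum>k\<in>(UNIV::('x::finite\<times>'y::finite) set). f k) = (\<Sum>a\<in>UNIV. \<Sum>b\<in>UNIV. f (a, b))"
proof -
  have "(\<Sum>k\<in>(UNIV::('x\<times>'y) set). f k) = (\<Sum>k\<in>(UNIV::'x set) \<times> (UNIV::'y set). f k)" by simp
  also have "\<dots> = (\<Sum>(a,b)\<in>(UNIV::'x set) \<times> (UNIV::'y set). f (a, b))" by (simp add: case_prod_beta')
  also have "\<dots> = (\<Sum>a\<in>UNIV. \<Sum>b\<in>UNIV. f (a, b))" by (rule sum.cartesian_product[symmetric])
  finally show ?thesis .
qed

lemma sum_if_indep: "(\<Sum>x\<in>S. if P then f x else 0) = (if P then \<Sum>x\<in>S. f x else 0)"
  by simp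

lemma sum_delta2: "(\<Sum>b\<in>(UNIV::'b::finite set). if i = b \<and> b = j then g b else 0) = (if i = j then g i else 0)"
proof (cases "i = j")
  case True
  then have "(\<Sum>b\<in>(UNIV::'b set). if i = b \<and> b = j then g b else 0) = (\<Sum>b\<in>UNIV. if i = b then g b else 0)"
    by (intro sum.cong) auto
  then show ?thesis using True by simp
qed (auto intro!: sum.neutral)

lemma if_mult_if: "(if P then a else 0) * (if Q then b else 0) = (if P \<and> Q then a * b else (0::'a::mult_zero))"
  by simp

lemma embAC_entry[simp]: "embAC A $ (ia, ib, ic) $ (ja, jb, jc) = (if ib = jb then A $ (ia, ic) $ (ja, jc) else 0)"
  by (simp add: embAC_def)
lemma embBC_entry[simp]: "embBC A $ (ia, ib, ic) $ (ja, jb, jc) = (if ia = ja then A $ (ib, ic) $ (jb, jc) else 0)"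
  by (simp add: embBC_def)
lemma embC_entry[simp]: "embC A $ (ia, ib, ic) $ (ja, jb, jc) = (if ia = ja \<and> ib = jb then A $ ic $ jc else 0)"
  by (simp add: embC_def)

lemma vec3_eq: "(\<And>ia ib ic ja jb jc. M $ (ia, ib, ic) $ (ja, jb, jc) = N $ (ia, ib, ic) $ (ja, jb, jc)) \<Longrightarrow> M = N"
  by (simp add: vec_eq_iff)

lemma embAC_mult: "embAC A ** embAC B = (embAC (A ** B) :: complex^('a::finite\<times>'b::finite\<times>'c::finite)^('a\<times>'b\<times>'c))"
proof (rule vec3_eq)
  fix ia ib ic ja jb jc
  have "(embAC A ** embAC B :: complex^('a\<times>'b\<times>'c)^('a\<times>'b\<times>'c)) $ (ia, ib, ic) $ (ja, jb, jc)
     = (\<Sum>a\<in>UNIV. \<Sum>b\<in>(UNIV::'b set). \<Sum>c\<in>UNIV. (if ib = b \<and> b = jb then A $ (ia, ic) $ (a, c) * B $ (a, c) $ (ja, jc) else 0))"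
    by (simp add: matrix_matrix_mult_def sum_UNIV_prod if_mult_if)
  also have "\<dots> = (\<Sum>b\<in>(UNIV::'b set). \<Sum>a\<in>UNIV. \<Sum>c\<in>UNIV. (if ib = b \<and> b = jb then A $ (ia, ic) $ (a, c) * B $ (a, c) $ (ja, jc) else 0))"
    by (rule sum.swap)
  also have "\<dots> = (if ib = jb then (\<Sum>a\<in>UNIV. \<Sum>c\<in>UNIV. A $ (ia, ic) $ (a, c) * B $ (a, c) $ (ja, jc)) else 0)"
    by (simp only: sum_if_indep sum_delta2)
  also have "\<dots> = embAC (A ** B) $ (ia, ib, ic) $ (ja, jb, jc)"
    by (simp add: matrix_matrix_mult_def sum_UNIV_prod)
  finally show "(embAC A ** embAC B :: complex^('a\<times>'b\<times>'c)^('a\<times>'b\<times>'c)) $ (ia, ib, ic) $ (ja, jb, jc) = embAC (A ** B) $ (ia, ib, ic) $ (ja, jb, jc)" .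
qed

lemma embBC_mult: "embBC A ** embBC B = (embBC (A ** B) :: complex^('a::finite\<times>'b::finite\<times>'c::finite)^('a\<times>'b\<times>'c))"
proof (rule vec3_eq)
  fix ia ib ic ja jb jc
  have "(embBC A ** embBC B :: complex^('a\<times>'b\<times>'c)^('a\<times>'b\<times>'c)) $ (ia, ib, ic) $ (ja, jb, jc)
     = (\<Sum>a\<in>(UNIV::'a set). \<Sum>b\<in>UNIV. \<Sum>c\<in>UNIV. (if ia = a \<and> a = ja then A $ (ib, ic) $ (b, c) * B $ (b, c) $ (jb, jc) else 0))"
    by (simp add: matrix_matrix_mult_def sum_UNIV_prod if_mult_if)
  also have "\<dots> = (if ia = ja then (\<Sum>b\<in>UNIV. \<Sum>c\<in>UNIV. A $ (ib, ic) $ (b, c) * B $ (b, c) $ (jb, jc)) else 0)"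
    by (simp only: sum_if_indep sum_delta2)
  also have "\<dots> = embBC (A ** B) $ (ia, ib, ic) $ (ja, jb, jc)"
    by (simp add: matrix_matrix_mult_def sum_UNIV_prod)
  finally show "(embBC A ** embBC B :: complex^('a\<times>'b\<times>'c)^('a\<times>'b\<times>'c)) $ (ia, ib, ic) $ (ja, jb, jc) = embBC (A ** B) $ (ia, ib, ic) $ (ja, jb, jc)" .
qed

lemma embC_mult: "embC A ** embC B = (embC (A ** B) :: complex^('a::finite\<times>'b::finite\<times>'c::finite)^('a\<times>'b\<times>'c))"
proof (rule vec3_eq)
  fix ia ib ic ja jb jc
  have "(embC A ** embC B :: complex^('a\<times>'b\<times>'c)^('a\<times>'b\<times>'c)) $ (ia, ib, ic) $ (ja, jb, jc)
     = (\<Sum>a\<in>(UNIV::'a set). \<Sum>b\<in>(UNIV::'b set). if ia = a \<and> a = ja then (if ib = b \<and> b = jb then (\<Sum>c\<in>UNIV. A $ ic $ c * B $ c $ jc) else 0) else 0)"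
    by (auto simp: matrix_matrix_mult_def sum_UNIV_prod intro!: sum.cong)
  also have "\<dots> = (if ia = ja then (if ib = jb then (\<Sum>c\<in>UNIV. A $ ic $ c * B $ c $ jc) else 0) else 0)"
    by (simp only: sum_if_indep sum_delta2)
  also have "\<dots> = embC (A ** B) $ (ia, ib, ic) $ (ja, jb, jc)"
    by (simp add: matrix_matrix_mult_def)
  finally show "(embC A ** embC B :: complex^('a\<times>'b\<times>'c)^('a\<times>'b\<times>'c)) $ (ia, ib, ic) $ (ja, jb, jc) = embC (A ** B) $ (ia, ib, ic) $ (ja, jb, jc)" .
qed

lemma emb_cadj:
  "cadj (embAC A) = (embAC (cadj A) :: complex^('a::finite\<times>'b::finite\<times>'c::finite)^('a\<times>'b\<times>'c))"
  "cadj (embBC B) = (embBC (cadj B) :: complex^('a::finite\<times>'b::finite\<times>'c::finite)^('a\<times>'b\<times>'c))"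
  "cadj (embC C) = (embC (cadj C) :: complex^('a::finite\<times>'b::finite\<times>'c::finite)^('a\<times>'b\<times>'c))"
  by (auto intro!: vec3_eq)

lemma emb_add:
  "embAC (A + A') = (embAC A + embAC A' :: complex^('a::finite\<times>'b::finite\<times>'c::finite)^('a\<times>'b\<times>'c))"
  "embBC (B + B') = (embBC B + embBC B' :: complex^('a::finite\<times>'b::finite\<times>'c::finite)^('a\<times>'b\<times>'c))"
  "embC (C + C') = (embC C + embC C' :: complex^('a::finite\<times>'b::finite\<times>'c::finite)^('a\<times>'b\<times>'c))"
  by (auto intro!: vec3_eq)

lemma emb_scaleR:
  "embAC (r *\<^sub>R A) = (r *\<^sub>R embAC A :: complex^('a::finite\<times>'b::finite\<times>'c::finite)^('a\<times>'b\<times>'c))"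
  "embBC (r *\<^sub>R B) = (r *\<^sub>R embBC B :: complex^('a::finite\<times>'b::finite\<times>'c::finite)^('a\<times>'b\<times>'c))"
  "embC (r *\<^sub>R C) = (r *\<^sub>R embC C :: complex^('a::finite\<times>'b::finite\<times>'c::finite)^('a\<times>'b\<times>'c))"
  by (auto intro!: vec3_eq)

lemma emb_diff:
  "embAC (A - A') = (embAC A - embAC A' :: complex^('a::finite\<times>'b::finite\<times>'c::finite)^('a\<times>'b\<times>'c))"
  "embBC (B - B') = (embBC B - embBC B' :: complex^('a::finite\<times>'b::finite\<times>'c::finite)^('a\<times>'b\<times>'c))"
  "embC (C - C') = (embC C - embC C' :: complex^('a::finite\<times>'b::finite\<times>'c::finite)^('a\<times>'b\<times>'c))"
  by (auto intro!: vec3_eq)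

lemma emb_mat1:
  "embAC (mat 1) = (mat 1 :: complex^('a::finite\<times>'b::finite\<times>'c::finite)^('a\<times>'b\<times>'c))"
  "embBC (mat 1) = (mat 1 :: complex^('a::finite\<times>'b::finite\<times>'c::finite)^('a\<times>'b\<times>'c))"
  "embC (mat 1) = (mat 1 :: complex^('a::finite\<times>'b::finite\<times>'c::finite)^('a\<times>'b\<times>'c))"
  by (auto intro!: vec3_eq simp: mat_def)

lemma emb_bl:
  "bounded_linear (embAC :: _ \<Rightarrow> complex^('a::finite\<times>'b::finite\<times>'c::finite)^('a\<times>'b\<times>'c))"
  "bounded_linear (embBC :: _ \<Rightarrow> complex^('a::finite\<times>'b::finite\<times>'c::finite)^('a\<times>'b\<times>'c))"
  "bounded_linear (embC :: _ \<Rightarrow> complex^('a::finite\<times>'b::finite\<times>'c::finite)^('a\<times>'b\<times>'c))"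
  by (simp_all add: linear_conv_bounded_linear[symmetric] linearI emb_add emb_scaleR)

lemma marg_entry[simp]:
  "margAC R $ (ia, ic) $ (ja, jc) = (\<Sum>b\<in>UNIV. R $ (ia, b, ic) $ (ja, b, jc))"
  "margBC R $ (ib, ic) $ (jb, jc) = (\<Sum>a\<in>UNIV. R $ (a, ib, ic) $ (a, jb, jc))"
  "margC R $ ic $ jc = (\<Sum>a\<in>UNIV. \<Sum>b\<in>UNIV. R $ (a, b, ic) $ (a, b, jc))"
  by (simp_all add: margAC_def margBC_def margC_def)

lemma marg_herm:
  assumes "hermitian R"
  shows "hermitian (margAC R)" "hermitian (margBC R)" "hermitian (margC R)"
proof -
  have R: "cnj (R $ j $ i) = R $ i $ j" for i j
    using assms unfolding hermitian_def by (metis cadj_component)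
  show "hermitian (margAC R)" unfolding hermitian_def
    by (simp add: vec_eq_iff split_paired_All cnj_sum R)
  show "hermitian (margBC R)" unfolding hermitian_def
    by (simp add: vec_eq_iff split_paired_All cnj_sum R)
  show "hermitian (margC R)" unfolding hermitian_def
    by (simp add: vec_eq_iff cnj_sum R)
qed


lemma tr_embAC: "mtrace (R ** embAC M) = mtrace (margAC R ** M)"
proof -
  have L: "mtrace (R ** embAC M) = (\<Sum>ia\<in>UNIV. \<Sum>ib\<in>UNIV. \<Sum>ic\<in>UNIV. \<Sum>a\<in>UNIV. \<Sum>c\<in>UNIV.
            R $ (ia, ib, ic) $ (a, ib, c) * M $ (a, c) $ (ia, ic))"
    by (simp add: mtrace_def matrix_matrix_mult_def sum_UNIV_prod mult_if0 sum_if_indep)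
  have Rt: "mtrace (margAC R ** M) = (\<Sum>ia\<in>UNIV. \<Sum>ic\<in>UNIV. \<Sum>a\<in>UNIV. \<Sum>c\<in>UNIV. \<Sum>ib\<in>UNIV.
            R $ (ia, ib, ic) $ (a, ib, c) * M $ (a, c) $ (ia, ic))"
    by (simp add: mtrace_def matrix_matrix_mult_def sum_UNIV_prod sum_distrib_right)
  show ?thesis unfolding L Rt
    apply (rule sum.cong[OF refl])
    apply (rule trans[OF sum.swap])
    apply (rule sum.cong[OF refl])
    apply (rule trans[OF sum.swap])
    apply (rule sum.cong[OF refl])
    apply (rule sum.swap)
    done
qed

lemma if_and0: "(if P \<and> Q then x else 0) = (if P then (if Q then x else 0) else 0)"
  by simp

lemma tr_embBC: "mtrace (R ** embBC M) = mtrace (margBC R ** M)"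
proof -
  have L: "mtrace (R ** embBC M) = (\<Sum>ia\<in>UNIV. \<Sum>ib\<in>UNIV. \<Sum>ic\<in>UNIV. \<Sum>b\<in>UNIV. \<Sum>c\<in>UNIV.
            R $ (ia, ib, ic) $ (ia, b, c) * M $ (b, c) $ (ib, ic))"
    by (simp add: mtrace_def matrix_matrix_mult_def sum_UNIV_prod mult_if0 sum_if_indep)
  have Rt: "mtrace (margBC R ** M) = (\<Sum>ib\<in>UNIV. \<Sum>ic\<in>UNIV. \<Sum>b\<in>UNIV. \<Sum>c\<in>UNIV. \<Sum>ia\<in>UNIV.
            R $ (ia, ib, ic) $ (ia, b, c) * M $ (b, c) $ (ib, ic))"
    by (simp add: mtrace_def matrix_matrix_mult_def sum_UNIV_prod sum_distrib_right)
  show ?thesis unfolding L Rt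
    apply (rule trans[OF sum.swap])
    apply (rule sum.cong[OF refl])
    apply (rule trans[OF sum.swap])
    apply (rule sum.cong[OF refl])
    apply (rule trans[OF sum.swap])
    apply (rule sum.cong[OF refl])
    apply (rule sum.swap)
    done
qed

lemma tr_embC: "mtrace (R ** embC M) = mtrace (margC R ** M)"
proof -
  have "mtrace (R ** embC M) = (\<Sum>ia\<in>UNIV. \<Sum>ib\<in>UNIV. \<Sum>ic\<in>UNIV. \<Sum>c\<in>UNIV.
            R $ (ia, ib, ic) $ (ia, ib, c) * M $ c $ ic)"
    by (simp add: mtrace_def matrix_matrix_mult_def sum_UNIV_prod mult_if0 if_and0 sum_if_indep)
  also have "\<dots> = (\<Sum>ia\<in>UNIV. \<Sum>ic\<in>UNIV. \<Sum>ib\<in>UNIV. \<Sum>c\<in>UNIV.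
            R $ (ia, ib, ic) $ (ia, ib, c) * M $ c $ ic)"
    by (rule sum.cong[OF refl], rule sum.swap)
  also have "\<dots> = (\<Sum>ic\<in>UNIV. \<Sum>ia\<in>UNIV. \<Sum>ib\<in>UNIV. \<Sum>c\<in>UNIV.
            R $ (ia, ib, ic) $ (ia, ib, c) * M $ c $ ic)"
    by (rule sum.swap)
  also have "\<dots> = (\<Sum>ic\<in>UNIV. \<Sum>ia\<in>UNIV. \<Sum>c\<in>UNIV. \<Sum>ib\<in>UNIV.
            R $ (ia, ib, ic) $ (ia, ib, c) * M $ c $ ic)"
    by (rule sum.cong[OF refl], rule sum.cong[OF refl], rule sum.swap)
  also have "\<dots> = (\<Sum>ic\<in>UNIV. \<Sum>c\<in>UNIV. \<Sum>ia\<in>UNIV. \<Sum>ib\<in>UNIV.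
            R $ (ia, ib, ic) $ (ia, ib, c) * M $ c $ ic)"
    by (rule sum.cong[OF refl], rule sum.swap)
  also have "\<dots> = mtrace (margC R ** M)"
    by (simp add: mtrace_def matrix_matrix_mult_def sum_distrib_right)
  finally show ?thesis .
qed


lemma quad_nonneg_zero:
  fixes a b :: real
  assumes a: "a \<ge> 0" and H: "\<And>t. 0 \<le> 2 * t * a + t^2 * b"
  shows "a = 0"
proof (rule ccontr)
  assume "a \<noteq> 0"
  with a have apos: "a > 0" by simp
  define s where "s = 1 / (\<bar>b\<bar> + 1)"
  have spos: "s > 0" by (simp add: s_def)
  have "0 \<le> 2 * (- s * a) * a + (- s * a)^2 * b" by (rule H)
  also have "\<dots> = (s * a * a) * (s * b - 2)" by (simp add: power2_eq_square algebra_simps)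
  finally have "0 \<le> (s * a * a) * (s * b - 2)" .
  moreover have "s * a * a > 0" using spos apos by simp
  ultimately have "0 \<le> s * b - 2" by (simp add: zero_le_mult_iff)
  moreover have "s * b \<le> s * \<bar>b\<bar>" using spos by (simp add: mult_left_mono)
  moreover have "s * \<bar>b\<bar> < 1" by (simp add: s_def)
  ultimately show False by simp
qed

lemma psd_qform_zero:
  assumes p: "psd R" and z: "Re (qform R x) = 0"
  shows "R *v x = 0"
proof -
  have herm: "hermitian R" using p by (simp add: psd_def)
  define y where "y = R *v x"
  define n where "n = (norm y)^2"
  have yy: "cinner y y = of_real n" by (simp add: n_def cinner_self)
  have xy: "cinner x (R *v y) = of_real n"
    by (simp add: hermitian_cinner[OF herm] y_def[symmetric] yy)
  have yx: "cinner y (R *v x) = of_real n" by (simp add: y_def[symmetric] yy)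
  have "0 \<le> 2 * t * n + t^2 * Re (qform R y)" for t
  proof -
    have "0 \<le> Re (qform R (x + t *\<^sub>R y))" using p by (simp add: psd_def)
    also have "qform R (x + t *\<^sub>R y) = qform R x + of_real t * cinner x (R *v y)
        + of_real t * cinner y (R *v x) + of_real t * of_real t * qform R y"
      by (simp add: qform_cinner matrix_vector_right_distrib mv_scaleR cinner_add_left
          cinner_add_right cinner_scaleR_left cinner_scaleR_right algebra_simps)
    finally show ?thesis using z by (simp add: xy yx power2_eq_square algebra_simps)
  qed
  from quad_nonneg_zero[OF _ this] have "n = 0" by (simp add: n_def)
  then show ?thesis by (simp add: n_def y_def)
qed

definition colm :: "complex^'n::finite^'n \<Rightarrow> 'n \<Rightarrow> complex^'n" where
  "colm Q i = (\<chi> j. Q $ j $ i)"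

lemma proj_trace:
  assumes hQ: "hermitian Q" and QQ: "Q ** Q = Q"
  shows "mtrace (R ** Q) = (\<Sum>i\<in>UNIV. qform R (colm Q i))"
proof -
  have Qc: "cnj (Q $ j $ i) = Q $ i $ j" for i j
    using hQ unfolding hermitian_def by (metis cadj_component)
  have "mtrace (R ** Q) = mtrace ((R ** Q) ** Q)" by (simp add: matrix_mul_assoc[symmetric] QQ)
  also have "\<dots> = mtrace (Q ** (R ** Q))" by (rule mtrace_cyclic)
  also have "\<dots> = (\<Sum>i\<in>UNIV. qform R (colm Q i))"
    unfolding mtrace_def qform_def colm_def
    by (simp add: matrix_matrix_mult_def matrix_vector_mult_def Qc)
  finally show ?thesis .
qed

lemma proj_trace_nonneg:
  assumes p: "psd R" and hQ: "hermitian Q" and QQ: "Q ** Q = Q"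
  shows "Re (mtrace (R ** Q)) \<ge> 0"
  using p by (simp add: proj_trace[OF hQ QQ] psd_def sum_nonneg)

lemma proj_trace_zero:
  assumes p: "psd R" and hQ: "hermitian Q" and QQ: "Q ** Q = Q"
    and z: "Re (mtrace (R ** Q)) = 0"
  shows "R ** Q = 0"
proof -
  have "(\<Sum>i\<in>UNIV. Re (qform R (colm Q i))) = 0" using z by (simp add: proj_trace[OF hQ QQ])
  moreover have "\<forall>i\<in>UNIV. 0 \<le> Re (qform R (colm Q i))" using p by (simp add: psd_def)
  ultimately have "\<forall>i\<in>UNIV. Re (qform R (colm Q i)) = 0"
    using sum_nonneg_eq_0_iff[of UNIV "\<lambda>i. Re (qform R (colm Q i))"] by simp
  then have Rc: "R *v colm Q i = 0" for i using psd_qform_zero[OF p] by blast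
  have "(R ** Q) $ j $ i = 0" for i j
    using arg_cong[OF Rc[of i], of "\<lambda>v. v $ j"]
    by (simp add: matrix_matrix_mult_def matrix_vector_mult_def colm_def)
  then show ?thesis by (simp add: vec_eq_iff)
qed

lemma matrix_sub_ldistrib: "(A::'a::ring_1^'n::finite^'m::finite) ** (B - C) = A ** B - A ** C"
  by (simp add: vec_eq_iff matrix_matrix_mult_def right_diff_distrib sum_subtractf)
lemma matrix_sub_rdistrib: "((A::'a::ring_1^'n::finite^'m::finite) - B) ** C = A ** C - B ** C"
  by (simp add: vec_eq_iff matrix_matrix_mult_def left_diff_distrib sum_subtractf)

lemma absorbs_from_left:
  assumes hR: "hermitian R" and hQ: "hermitian Q" and QR: "Q ** R = R"
  shows "absorbs R Q"
proof -
  have "R ** Q = cadj (Q ** R)"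
    using hR hQ by (simp add: cadj_mult hermitian_def)
  then show ?thesis using QR hR by (simp add: absorbs_def hermitian_def)
qed

lemma absorb_supp:
  assumes hR: "hermitian R" and hQ: "hermitian Q" and QM: "Q ** M = M" and sup: "supp R \<subseteq> supp M"
  shows "absorbs R Q"
proof (rule absorbs_from_left[OF hR hQ])
  have "(Q ** R) *v v = R *v v" for v
  proof -
    have "R *v v \<in> supp M" using sup by (auto simp: supp_def)
    then obtain w where w: "R *v v = M *v w" by (auto simp: supp_def)
    have "(Q ** R) *v v = Q *v (M *v w)" by (simp add: matrix_vector_mul_assoc[symmetric] w)
    also have "\<dots> = M *v w" by (simp add: matrix_vector_mul_assoc QM)
    finally show ?thesis by (simp add: w)
  qed
  then show "Q ** R = R" by (simp add: matrix_eq)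
qed

lemma absorb_from_proj:
  assumes p: "psd R" and hP: "hermitian P" and PP: "P ** P = P"
    and z: "Re (mtrace (R ** (mat 1 - P))) = 0"
  shows "absorbs R P"
proof -
  have hQ: "hermitian (mat 1 - P)" using hP
    by (simp add: hermitian_def vec_eq_iff mat_def)
  have QQ: "(mat 1 - P) ** (mat 1 - P) = mat 1 - P"
    by (simp add: matrix_sub_ldistrib matrix_sub_rdistrib PP)
  have "R ** (mat 1 - P) = 0" by (rule proj_trace_zero[OF p hQ QQ z])
  then have RP: "R ** P = R" by (simp add: matrix_sub_ldistrib)
  have hR: "hermitian R" using p by (simp add: psd_def)
  have "P ** R = cadj (R ** P)" using hR hP by (simp add: cadj_mult hermitian_def)
  then show ?thesis using RP hR by (simp add: absorbs_def hermitian_def)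
qed


lemma emb_deriv:
  assumes bl: "bounded_linear E" and T: "nonneg T"
  shows "((\<lambda>p. E (mpow p T)) has_vector_derivative E (mlog T)) (at 0)"
  by (rule bounded_linear.has_vector_derivative[OF bl state_facts(1)[OF T]])

lemma emb_deriv_neg:
  assumes bl: "bounded_linear E" and T: "nonneg T"
  shows "((\<lambda>p. E (mpow (- p) T)) has_vector_derivative (-1) *\<^sub>R E (mlog T)) (at 0)"
  using vd_affine[of "\<lambda>p. E (mpow p T)" "E (mlog T)" "-1" 0 0] emb_deriv[OF bl T] by simp

lemma absorb_emb:
  fixes E :: "complex^'m::finite^'m \<Rightarrow> complex^'n::finite^'n"
  assumes hR: "hermitian R" and T: "nonneg T"
    and Em: "\<And>A B. E A ** E B = E (A ** B)" and Ec: "\<And>A. cadj (E A) = E (cadj A)"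
    and sup: "supp R \<subseteq> supp (E T)"
  shows "absorbs R (E (mpow 0 T))"
proof (rule absorb_supp[OF hR _ _ sup])
  show "hermitian (E (mpow 0 T))" using state_facts(5)[OF T] by (simp add: hermitian_def Ec)
  have "mpow 0 T ** T = T" using state_facts(4)[OF T] by (simp add: absorbs_def)
  then show "E (mpow 0 T) ** E T = E T" by (simp add: Em)
qed

lemma nonneg_via_emb:
  fixes E :: "complex^'m::finite^'m \<Rightarrow> complex^'n::finite^'n"
  assumes p: "psd R" and hT: "hermitian T"
    and tr: "\<And>M. mtrace (R ** E M) = mtrace (T ** M)"
    and Em: "\<And>A B. E A ** E B = E (A ** B)" and Ec: "\<And>A. cadj (E A) = E (cadj A)"
  shows "nonneg T"
  unfolding nonneg_def
proof (intro conjI hT allI impI)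
  fix U d k assume u: "unitary U" and T: "T = SD U d"
  define \<delta> where "\<delta> (l::'m) = (if l = k then 1 else (0::real))" for l
  define Q where "Q = E (SD U \<delta>)"
  have hQ: "hermitian Q" by (simp add: Q_def hermitian_def Ec cadj_SD)
  have dd: "(\<lambda>l. \<delta> l * \<delta> l) = \<delta>" by (auto simp: \<delta>_def)
  have QQ: "Q ** Q = Q" by (simp add: Q_def Em SD_mult[OF u] dd)
  have "mtrace (R ** Q) = mtrace (T ** SD U \<delta>)" by (simp add: Q_def tr)
  also have "\<dots> = of_real (d k)"
    by (simp add: T SD_mult[OF u] mtrace_SD[OF u] \<delta>_def mult_if0)
  finally show "d k \<ge> 0" using proj_trace_nonneg[OF p hQ QQ] by simp
qed

lemma absorb_marg:
  fixes E :: "complex^'m::finite^'m \<Rightarrow> complex^'n::finite^'n"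
  assumes p: "psd R" and T: "nonneg T"
    and tr: "\<And>M. mtrace (R ** E M) = mtrace (T ** M)"
    and Em: "\<And>A B. E A ** E B = E (A ** B)" and Ec: "\<And>A. cadj (E A) = E (cadj A)"
    and E1: "E (mat 1) = mat 1" and Ed: "\<And>A B. E (A - B) = E A - E B"
  shows "absorbs R (E (mpow 0 T))"
proof (rule absorb_from_proj[OF p])
  show "hermitian (E (mpow 0 T))" using state_facts(5)[OF T] by (simp add: hermitian_def Ec)
  show "E (mpow 0 T) ** E (mpow 0 T) = E (mpow 0 T)" by (simp add: Em state_facts(6)[OF T])
  have "mtrace (R ** (mat 1 - E (mpow 0 T))) = mtrace (T ** (mat 1 - mpow 0 T))"
    by (simp add: E1[symmetric] Ed[symmetric] tr)
  then show "Re (mtrace (R ** (mat 1 - E (mpow 0 T)))) = 0" using state_facts(7)[OF T] by simp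
qed

lemma core_perm:
  fixes R L :: "complex^'n::finite^'n" and A B C :: "real \<Rightarrow> complex^'n^'n"
  assumes Rd: "((\<lambda>p. mpow p R) has_vector_derivative L ** R) (at 1)"
    and R1: "mpow 1 R = R" and tr: "mtrace R = 1"
    and Ad: "(A has_vector_derivative LA) (at 0)" and Aa: "absorbs R (A 0)"
    and Bd: "(B has_vector_derivative LB) (at 0)" and Ba: "absorbs R (B 0)"
    and Cd: "(C has_vector_derivative LC) (at 0)" and Ca: "absorbs R (C 0)"
    and v: "v = Re (mtrace (R ** L)) - Re (mtrace (R ** LA)) - Re (mtrace (R ** LB)) - Re (mtrace (R ** LC))"
  shows "\<forall>(X, Y, Z) \<in> perm_triples A B C. ((\<lambda>\<alpha>. DeltaAlpha R X Y Z \<alpha>) \<longlongrightarrow> v) (at 1)"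
proof -
  note cl = core_limit[of "\<lambda>p. mpow p R" L R, OF Rd R1 tr]
  show ?thesis unfolding perm_triples_def DeltaAlpha_def
    by (auto intro: tendsto_eq_rhs[OF cl[OF Ad Aa Bd Ba Cd Ca]] tendsto_eq_rhs[OF cl[OF Ad Aa Cd Ca Bd Ba]]
        tendsto_eq_rhs[OF cl[OF Bd Ba Ad Aa Cd Ca]] tendsto_eq_rhs[OF cl[OF Bd Ba Cd Ca Ad Aa]]
        tendsto_eq_rhs[OF cl[OF Cd Ca Ad Aa Bd Ba]] tendsto_eq_rhs[OF cl[OF Cd Ca Bd Ba Ad Aa]] simp: v)
qed


theorem mainTheorem7:
  fixes \<rho> :: "complex^('a::finite\<times>'b::finite\<times>'c::finite)^('a\<times>'b\<times>'c)"
    and \<tau> :: "complex^('a\<times>'c)^('a\<times>'c)"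
    and \<theta> :: "complex^('b\<times>'c)^('b\<times>'c)"
    and \<omega> :: "complex^'c^'c"
  assumes "density \<rho>" and "density \<tau>" and "density \<theta>" and "density \<omega>"
    and "supp \<rho> \<subseteq> supp (embAC \<tau> :: complex^('a\<times>'b\<times>'c)^('a\<times>'b\<times>'c))
                   \<inter> supp (embBC \<theta> :: complex^('a\<times>'b\<times>'c)^('a\<times>'b\<times>'c))
                   \<inter> supp (embC \<omega> :: complex^('a\<times>'b\<times>'c)^('a\<times>'b\<times>'c))"
  shows "(\<forall>(X, Y, Z) \<in> perm_triples (tauF \<tau>) (omegaF \<omega>) (thetaF \<theta>).
            ((\<lambda>\<alpha>. DeltaAlpha \<rho> X Y Z \<alpha>) \<longlongrightarrow> Delta \<rho> \<tau> \<theta> \<omega>) (at 1))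
       \<and> (\<forall>(X, Y, Z) \<in> perm_triples (tauF (margAC \<rho>)) (omegaF (margC \<rho>)) (thetaF (margBC \<rho>)).
            ((\<lambda>\<alpha>. DeltaAlpha \<rho> X Y Z \<alpha>) \<longlongrightarrow> cmi \<rho>) (at 1))"
proof -
  have pR: "psd \<rho>" and tR: "mtrace \<rho> = 1" using assms(1) by (simp_all add: density_def)
  have hR: "hermitian \<rho>" using pR by (simp add: psd_def)
  have nR: "nonneg \<rho>" by (rule psd_nonneg[OF pR])
  note sf = state_facts[OF nR]
  have nT: "nonneg \<tau>" using assms(2) by (simp add: density_def psd_nonneg)
  have nTh: "nonneg \<theta>" using assms(3) by (simp add: density_def psd_nonneg)
  have nW: "nonneg \<omega>" using assms(4) by (simp add: density_def psd_nonneg)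
  have tauF_eq: "tauF T = (\<lambda>p. embAC (mpow p T))" for T :: "complex^('a\<times>'c)^('a\<times>'c)"
    by (simp add: fun_eq_iff tauF_def)
  have thetaF_eq: "thetaF T = (\<lambda>p. embBC (mpow p T))" for T :: "complex^('b\<times>'c)^('b\<times>'c)"
    by (simp add: fun_eq_iff thetaF_def)
  have omegaF_eq: "omegaF T = (\<lambda>p. embC (mpow (- p) T))" for T :: "complex^'c^'c"
    by (simp add: fun_eq_iff omegaF_def)
  have vDelta: "Delta \<rho> \<tau> \<theta> \<omega> = Re (mtrace (\<rho> ** mlog \<rho>)) - Re (mtrace (\<rho> ** embAC (mlog \<tau>)))
      - Re (mtrace (\<rho> ** ((-1) *\<^sub>R embC (mlog \<omega>)))) - Re (mtrace (\<rho> ** embBC (mlog \<theta>)))"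
    by (simp add: Delta_def matrix_add_ldistrib matrix_sub_ldistrib mtrace_add mtrace_diff
        mm_scaleR_right mtrace_scaleR mm_uminus_right mtrace_uminus)
  have part1: "\<forall>(X, Y, Z) \<in> perm_triples (tauF \<tau>) (omegaF \<omega>) (thetaF \<theta>).
            ((\<lambda>\<alpha>. DeltaAlpha \<rho> X Y Z \<alpha>) \<longlongrightarrow> Delta \<rho> \<tau> \<theta> \<omega>) (at 1)"
  proof (rule core_perm[OF sf(2) sf(3) tR])
    show "(tauF \<tau> has_vector_derivative embAC (mlog \<tau>)) (at 0)"
      unfolding tauF_eq by (rule emb_deriv[OF emb_bl(1) nT])
    show "(omegaF \<omega> has_vector_derivative (-1) *\<^sub>R embC (mlog \<omega>)) (at 0)"
      unfolding omegaF_eq by (rule emb_deriv_neg[OF emb_bl(3) nW])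
    show "(thetaF \<theta> has_vector_derivative embBC (mlog \<theta>)) (at 0)"
      unfolding thetaF_eq by (rule emb_deriv[OF emb_bl(2) nTh])
    show "absorbs \<rho> (tauF \<tau> 0)" unfolding tauF_eq
      by (rule absorb_emb[OF hR nT embAC_mult emb_cadj(1)]) (use assms(5) in blast)
    show "absorbs \<rho> (omegaF \<omega> 0)" unfolding omegaF_eq minus_zero
      by (rule absorb_emb[OF hR nW embC_mult emb_cadj(3)]) (use assms(5) in blast)
    show "absorbs \<rho> (thetaF \<theta> 0)" unfolding thetaF_eq
      by (rule absorb_emb[OF hR nTh embBC_mult emb_cadj(2)]) (use assms(5) in blast)
  qed (rule vDelta)
  have nTAC: "nonneg (margAC \<rho>)"
    by (rule nonneg_via_emb[OF pR marg_herm(1)[OF hR] tr_embAC embAC_mult emb_cadj(1)])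
  have nTBC: "nonneg (margBC \<rho>)"
    by (rule nonneg_via_emb[OF pR marg_herm(2)[OF hR] tr_embBC embBC_mult emb_cadj(2)])
  have nTC: "nonneg (margC \<rho>)"
    by (rule nonneg_via_emb[OF pR marg_herm(3)[OF hR] tr_embC embC_mult emb_cadj(3)])
  have vcmi: "cmi \<rho> = Re (mtrace (\<rho> ** mlog \<rho>)) - Re (mtrace (\<rho> ** embAC (mlog (margAC \<rho>))))
      - Re (mtrace (\<rho> ** ((-1) *\<^sub>R embC (mlog (margC \<rho>))))) - Re (mtrace (\<rho> ** embBC (mlog (margBC \<rho>))))"
    by (simp add: cmi_def entropy_def tr_embAC tr_embBC tr_embC mm_scaleR_right mtrace_scaleR mm_uminus_right mtrace_uminus)
  have part2: "\<forall>(X, Y, Z) \<in> perm_triples (tauF (margAC \<rho>)) (omegaF (margC \<rho>)) (thetaF (margBC \<rho>)).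
            ((\<lambda>\<alpha>. DeltaAlpha \<rho> X Y Z \<alpha>) \<longlongrightarrow> cmi \<rho>) (at 1)"
  proof (rule core_perm[OF sf(2) sf(3) tR])
    show "(tauF (margAC \<rho>) has_vector_derivative embAC (mlog (margAC \<rho>))) (at 0)"
      unfolding tauF_eq by (rule emb_deriv[OF emb_bl(1) nTAC])
    show "(omegaF (margC \<rho>) has_vector_derivative (-1) *\<^sub>R embC (mlog (margC \<rho>))) (at 0)"
      unfolding omegaF_eq by (rule emb_deriv_neg[OF emb_bl(3) nTC])
    show "(thetaF (margBC \<rho>) has_vector_derivative embBC (mlog (margBC \<rho>))) (at 0)"
      unfolding thetaF_eq by (rule emb_deriv[OF emb_bl(2) nTBC])
    show "absorbs \<rho> (tauF (margAC \<rho>) 0)" unfolding tauF_eq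
      by (rule absorb_marg[OF pR nTAC tr_embAC embAC_mult emb_cadj(1) emb_mat1(1) emb_diff(1)])
    show "absorbs \<rho> (omegaF (margC \<rho>) 0)" unfolding omegaF_eq minus_zero
      by (rule absorb_marg[OF pR nTC tr_embC embC_mult emb_cadj(3) emb_mat1(3) emb_diff(3)])
    show "absorbs \<rho> (thetaF (margBC \<rho>) 0)" unfolding thetaF_eq
      by (rule absorb_marg[OF pR nTBC tr_embBC embBC_mult emb_cadj(2) emb_mat1(2) emb_diff(2)])
  qed (rule vcmi)
  show ?thesis using part1 part2 by blast
qed


end
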